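(* Let $\alpha\in\{1,\tfrac32,2\}$ and let $\Phi^\ddagger:\mathcal{M}_2\to\mathcal{M}_2$ be a unital $\alpha$-positive linear map. Write the spectrum of $\Phi^\ddagger$, counted with algebraic multiplicity, as $\{1,\lambda_1,\lambda_2,\lambda_3\}$ with $\lambda_k=x_k+iy_k$ ($x_k,y_k\in\mathbb{R}$) ordered so that $x_1\ge x_2\ge x_3$. Then $$(\alpha-1)(1+x_3)\ \ge\ 2(\alpha-2)+x_1+x_2 .$$ In particular, for a unital Schwarz map $1+x_3\ge 2(x_1+x_2-1)$, and for a unital completely positive map $1+x_3\ge x_1+x_2$.
   Context: "$\alpha$-positive" means: positive for $\alpha=1$ (maps positive semidefinite matrices to positive semidefinite matrices), unital Schwarz for $\alpha=3/2$ (i.e. $\Phi(X^\dagger X)\ge\Phi(X)^\dagger\Phi(X)$ for all $X$), and completely positive for $\alpha=2$. Unital means $\Phi^\ddagger(\mathbb{1})=\mathbb{1}$. *)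

theory Defs
  imports "Jordan_Normal_Form.Char_Poly"
begin

definition adj_mat :: "complex mat \<Rightarrow> complex mat" where
  "adj_mat A = mat (dim_col A) (dim_row A) (\<lambda>(i,j). cnj (A $$ (j,i)))"

definition psd :: "nat \<Rightarrow> complex mat \<Rightarrow> bool" where
  "psd n A \<longleftrightarrow> A \<in> carrier_mat n n \<and> adj_mat A = A \<and>
     (\<forall>v :: nat \<Rightarrow> complex.
        Re (\<Sum>i<n. \<Sum>j<n. cnj (v i) * A $$ (i,j) * v j) \<ge> 0)"

definition linear_map_M2 :: "(complex mat \<Rightarrow> complex mat) \<Rightarrow> bool" where
  "linear_map_M2 \<Phi> \<longleftrightarrow>
     (\<forall>X \<in> carrier_mat 2 2. \<Phi> X \<in> carrier_mat 2 2) \<and>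
     (\<forall>X \<in> carrier_mat 2 2. \<forall>Y \<in> carrier_mat 2 2. \<Phi> (X + Y) = \<Phi> X + \<Phi> Y) \<and>
     (\<forall>c. \<forall>X \<in> carrier_mat 2 2. \<Phi> (c \<cdot>\<^sub>m X) = c \<cdot>\<^sub>m \<Phi> X)"

definition unital_M2 :: "(complex mat \<Rightarrow> complex mat) \<Rightarrow> bool" where
  "unital_M2 \<Phi> \<longleftrightarrow> \<Phi> (1\<^sub>m 2) = 1\<^sub>m 2"

definition positive_map :: "(complex mat \<Rightarrow> complex mat) \<Rightarrow> bool" where
  "positive_map \<Phi> \<longleftrightarrow> (\<forall>X. psd 2 X \<longrightarrow> psd 2 (\<Phi> X))"

definition schwarz_map :: "(complex mat \<Rightarrow> complex mat) \<Rightarrow> bool" where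
  "schwarz_map \<Phi> \<longleftrightarrow> (\<forall>X \<in> carrier_mat 2 2.
      psd 2 (\<Phi> (adj_mat X * X) - adj_mat (\<Phi> X) * \<Phi> X))"

text \<open>The (p,q) 2x2 block of a 2n x 2n matrix, and the map id_n tensor Phi applied blockwise.\<close>
definition block2 :: "complex mat \<Rightarrow> nat \<Rightarrow> nat \<Rightarrow> complex mat" where
  "block2 X p q = mat 2 2 (\<lambda>(i,j). X $$ (2*p+i, 2*q+j))"

definition ampliate :: "nat \<Rightarrow> (complex mat \<Rightarrow> complex mat) \<Rightarrow> complex mat \<Rightarrow> complex mat" where
  "ampliate n \<Phi> X = mat (2*n) (2*n)
     (\<lambda>(a,b). \<Phi> (block2 X (a div 2) (b div 2)) $$ (a mod 2, b mod 2))"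

definition completely_positive :: "(complex mat \<Rightarrow> complex mat) \<Rightarrow> bool" where
  "completely_positive \<Phi> \<longleftrightarrow>
     (\<forall>n X. psd (2*n) X \<longrightarrow> psd (2*n) (ampliate n \<Phi> X))"

definition alpha_positive :: "real \<Rightarrow> (complex mat \<Rightarrow> complex mat) \<Rightarrow> bool" where
  "alpha_positive \<alpha> \<Phi> \<longleftrightarrow>
     (\<alpha> = 1 \<and> positive_map \<Phi>) \<or> (\<alpha> = 3/2 \<and> schwarz_map \<Phi>) \<or>
     (\<alpha> = 2 \<and> completely_positive \<Phi>)"

text \<open>Matrix of Phi on the basis E_00,E_01,E_10,E_11 (index 2*i+j).\<close>
definition rep_mat :: "(complex mat \<Rightarrow> complex mat) \<Rightarrow> complex mat" where
  "rep_mat \<Phi> = mat 4 4 (\<lambda>(r,s).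
     \<Phi> (mat 2 2 (\<lambda>(k,l). if (k,l) = (s div 2, s mod 2) then 1 else 0)) $$ (r div 2, r mod 2))"

end

theory Submission
  imports Defs
begin


definition Kf :: "(nat \<Rightarrow> nat \<Rightarrow> nat \<Rightarrow> nat \<Rightarrow> complex) \<Rightarrow> (nat \<Rightarrow> complex) \<Rightarrow> (nat \<Rightarrow> complex) \<Rightarrow> (nat \<Rightarrow> complex) \<Rightarrow> (nat \<Rightarrow> complex) \<Rightarrow> complex" where
  "Kf f u w x y = (\<Sum>i<2. \<Sum>j<2. \<Sum>k<2. \<Sum>l<2. cnj (u i) * f i j k l * (x k * cnj (y l)) * w j)"

definition v2 :: "complex \<Rightarrow> complex \<Rightarrow> nat \<Rightarrow> complex" where
  "v2 p q = (\<lambda>i. if i = 0 then p else q)"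

definition Gf :: "(nat \<Rightarrow> nat \<Rightarrow> nat \<Rightarrow> nat \<Rightarrow> complex) \<Rightarrow> (nat \<Rightarrow> nat \<Rightarrow> complex) \<Rightarrow> complex" where
  "Gf f W = (\<Sum>i<2. \<Sum>j<2. \<Sum>k<2. \<Sum>l<2. cnj (W i j) * f i j k l * W k l)"

definition Nf :: "(nat \<Rightarrow> nat \<Rightarrow> complex) \<Rightarrow> complex" where
  "Nf W = (\<Sum>i<2. \<Sum>j<2. cnj (W i j) * W i j)"

definition nv :: "(nat \<Rightarrow> complex) \<Rightarrow> real" where
  "nv x = (\<Sum>i<2. (cmod (x i))^2)"

definition Hz :: "real \<Rightarrow> complex \<Rightarrow> nat \<Rightarrow> nat \<Rightarrow> complex" where
  "Hz h z = (\<lambda>i j. if i = 0 then (if j = 0 then complex_of_real h else z) else (if j = 0 then cnj z else - complex_of_real h))"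

definition unitalf :: "(nat \<Rightarrow> nat \<Rightarrow> nat \<Rightarrow> nat \<Rightarrow> complex) \<Rightarrow> bool" where
  "unitalf f \<longleftrightarrow> f 0 0 1 1 = 1 - f 0 0 0 0 \<and> f 0 1 1 1 = - f 0 1 0 0 \<and> f 1 0 1 1 = - f 1 0 0 0 \<and> f 1 1 1 1 = 1 - f 1 1 0 0"

lemma unitalfD:
  assumes "unitalf f"
  shows "f 0 0 (Suc 0) (Suc 0) = 1 - f 0 0 0 0" "f 0 (Suc 0) (Suc 0) (Suc 0) = - f 0 (Suc 0) 0 0"
    "f (Suc 0) 0 (Suc 0) (Suc 0) = - f (Suc 0) 0 0 0" "f (Suc 0) (Suc 0) (Suc 0) (Suc 0) = 1 - f (Suc 0) (Suc 0) 0 0"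
  using assms unfolding unitalf_def by auto

lemma sum2: "(\<Sum>i<2. g i) = g 0 + g (1::nat)"
  by (simp add: numeral_2_eq_2)

definition "psv p q = v2 p q"
definition "phv p q = v2 (- cnj q) (cnj p)"

lemma Kf_trace:
  "(p * cnj p + q * cnj q)^2 * (\<Sum>k<2. \<Sum>l<2. f k l k l) =
   Kf f (psv p q) (psv p q) (psv p q) (psv p q) + Kf f (phv p q) (phv p q) (phv p q) (phv p q)
  + Kf f (phv p q) (psv p q) (phv p q) (psv p q) + Kf f (psv p q) (phv p q) (psv p q) (phv p q)"
  unfolding Kf_def sum2 psv_def phv_def v2_def by (simp add: algebra_simps power2_eq_square)

lemma Kf_unital1:
  assumes "unitalf f"
  shows "Kf f (psv p q) (psv p q) (psv p q) (psv p q) + Kf f (psv p q) (psv p q) (phv p q) (phv p q) = (p * cnj p + q * cnj q)^2"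
  unfolding Kf_def sum2 psv_def phv_def v2_def by (simp add: unitalfD[OF assms] algebra_simps power2_eq_square)

lemma Kf_unital2:
  assumes "unitalf f"
  shows "Kf f (phv p q) (phv p q) (phv p q) (phv p q) + Kf f (phv p q) (phv p q) (psv p q) (psv p q) = (p * cnj p + q * cnj q)^2"
  unfolding Kf_def sum2 psv_def phv_def v2_def by (simp add: unitalfD[OF assms] algebra_simps power2_eq_square)

lemma Gf_H:
  assumes "unitalf f"
  shows "Gf f (\<lambda>i j. psv p q i * cnj (psv p q j) - phv p q i * cnj (phv p q j)) =
    2 * (Kf f (psv p q) (psv p q) (psv p q) (psv p q) + Kf f (phv p q) (phv p q) (phv p q) (phv p q)) - 2 * (p * cnj p + q * cnj q)^2"
  unfolding Kf_def Gf_def sum2 psv_def phv_def v2_def by (simp add: unitalfD[OF assms] algebra_simps power2_eq_square)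

lemma Nf_H:
  shows "Nf (\<lambda>i j. psv p q i * cnj (psv p q j) - phv p q i * cnj (phv p q j)) = 2 * (p * cnj p + q * cnj q)^2"
  unfolding Nf_def sum2 psv_def phv_def v2_def by (simp add: algebra_simps power2_eq_square)



lemma cnj_R: "p * cnj p + q * cnj q = complex_of_real ((cmod p)^2 + (cmod q)^2)"
  by (simp only: of_real_add of_real_power complex_norm_square[symmetric])

lemma nv_psv: "nv (psv p q) = (cmod p)^2 + (cmod q)^2"
  unfolding nv_def sum2 psv_def phv_def v2_def by simp
lemma nv_phv: "nv (phv p q) = (cmod p)^2 + (cmod q)^2"
  unfolding nv_def sum2 psv_def phv_def v2_def by simp

lemma H_upper:
  assumes U: "unitalf f" and P: "\<And>u x. Re (Kf f u u x x) \<ge> 0"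
  shows "Re (Gf f (\<lambda>i j. psv p q i * cnj (psv p q j) - phv p q i * cnj (phv p q j)))
     \<le> Re (Nf (\<lambda>i j. psv p q i * cnj (psv p q j) - phv p q i * cnj (phv p q j)))"
proof -
  define r where "r = (cmod p)^2 + (cmod q)^2"
  have R: "p * cnj p + q * cnj q = complex_of_real r" unfolding r_def by (rule cnj_R)
  have 1: "Re (Kf f (psv p q) (psv p q) (psv p q) (psv p q)) + Re (Kf f (psv p q) (psv p q) (phv p q) (phv p q)) = r^2"
    using arg_cong[OF Kf_unital1[OF U, of p q], of Re] unfolding R by (simp flip: of_real_power)
  have 2: "Re (Kf f (phv p q) (phv p q) (phv p q) (phv p q)) + Re (Kf f (phv p q) (phv p q) (psv p q) (psv p q)) = r^2"
    using arg_cong[OF Kf_unital2[OF U, of p q], of Re] unfolding R by (simp flip: of_real_power)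
  have G: "Re (Gf f (\<lambda>i j. psv p q i * cnj (psv p q j) - phv p q i * cnj (phv p q j))) =
     2 * (Re (Kf f (psv p q) (psv p q) (psv p q) (psv p q)) + Re (Kf f (phv p q) (phv p q) (phv p q) (phv p q))) - 2 * r^2"
    using arg_cong[OF Gf_H[OF U, of p q], of Re] unfolding R by (simp flip: of_real_power)
  have N: "Re (Nf (\<lambda>i j. psv p q i * cnj (psv p q j) - phv p q i * cnj (phv p q j))) = 2 * r^2"
    using arg_cong[OF Nf_H[of p q], of Re] unfolding R by (simp flip: of_real_power)
  show ?thesis unfolding G N using 1 2 P[of "psv p q" "phv p q"] P[of "phv p q" "psv p q"] by (smt (verit))
qed

lemma H_cp:
  assumes U: "unitalf f"
    and C: "\<And>uA uB zA zB. Re (Kf f uA uA zA zA + Kf f uA uB zA zB + Kf f uB uA zB zA + Kf f uB uB zB zB) \<ge> 0"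
  shows "2 * Re (Gf f (\<lambda>i j. psv p q i * cnj (psv p q j) - phv p q i * cnj (phv p q j)))
     \<ge> (Re (\<Sum>k<2. \<Sum>l<2. f k l k l) - 2) * Re (Nf (\<lambda>i j. psv p q i * cnj (psv p q j) - phv p q i * cnj (phv p q j)))"
proof -
  define r where "r = (cmod p)^2 + (cmod q)^2"
  have R: "p * cnj p + q * cnj q = complex_of_real r" unfolding r_def by (rule cnj_R)
  have T: "r^2 * Re (\<Sum>k<2. \<Sum>l<2. f k l k l) =
   Re (Kf f (psv p q) (psv p q) (psv p q) (psv p q)) + Re (Kf f (phv p q) (phv p q) (phv p q) (phv p q))
  + Re (Kf f (phv p q) (psv p q) (phv p q) (psv p q)) + Re (Kf f (psv p q) (phv p q) (psv p q) (phv p q))"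
    using arg_cong[OF Kf_trace[of p q f], of Re] unfolding R by (simp flip: of_real_power)
  have G: "Re (Gf f (\<lambda>i j. psv p q i * cnj (psv p q j) - phv p q i * cnj (phv p q j))) =
     2 * (Re (Kf f (psv p q) (psv p q) (psv p q) (psv p q)) + Re (Kf f (phv p q) (phv p q) (phv p q) (phv p q))) - 2 * r^2"
    using arg_cong[OF Gf_H[OF U, of p q], of Re] unfolding R by (simp flip: of_real_power)
  have N: "Re (Nf (\<lambda>i j. psv p q i * cnj (psv p q j) - phv p q i * cnj (phv p q j))) = 2 * r^2"
    using arg_cong[OF Nf_H[of p q], of Re] unfolding R by (simp flip: of_real_power)
  have neg: "Kf f u (\<lambda>i. - w i) x y = - Kf f u w x y" "Kf f (\<lambda>i. - u i) w x y = - Kf f u w x y" for u w x y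
    unfolding Kf_def sum2 by (simp_all add: algebra_simps)
  have c: "Re (Kf f (psv p q) (psv p q) (psv p q) (psv p q)) + Re (Kf f (phv p q) (phv p q) (phv p q) (phv p q))
     - Re (Kf f (phv p q) (psv p q) (phv p q) (psv p q)) - Re (Kf f (psv p q) (phv p q) (psv p q) (phv p q)) \<ge> 0"
    using C[where uA="psv p q" and uB="\<lambda>i. - phv p q i" and zA="psv p q" and zB="phv p q"] unfolding neg by simp
  show ?thesis unfolding G N using T c by (simp add: algebra_simps power2_eq_square)
qed



lemma sch_arith:
  fixes R A s :: real
  assumes R: "R \<ge> 0" and A: "A \<ge> 0" and h: "R * A \<ge> s^2 / 2"
  shows "A - 2 * s + 2 * R \<ge> 0"
proof (cases "R = 0")
  case True
  then have "s^2 \<le> 0" using h by simp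
  then have "s^2 = 0" using zero_le_power2[of s] by linarith
  then have "s = 0" by simp
  then show ?thesis using A True by simp
next
  case False
  then have Rp: "R > 0" using R by simp
  have e: "R * (A - 2 * s + 2 * R) - (s - 2 * R)^2 / 2 = R * A - s^2/2"
    by (simp add: field_simps power2_eq_square)
  have "R * (A - 2 * s + 2 * R) \<ge> (s - 2 * R)^2 / 2"
    using h e by linarith
  moreover have "(s - 2 * R)^2 / 2 \<ge> 0" by simp
  ultimately have "R * (A - 2 * s + 2 * R) \<ge> 0" by linarith
  then show ?thesis using Rp by (simp add: zero_le_mult_iff)
qed

lemma H_sch:
  assumes U: "unitalf f" and P: "\<And>u x. Re (Kf f u u x x) \<ge> 0"
    and S: "\<And>x y u w. nv x * nv w * Re (Kf f u u y y) \<ge> (cmod (Kf f w u x y))^2"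
  shows "3 * Re (Gf f (\<lambda>i j. psv p q i * cnj (psv p q j) - phv p q i * cnj (phv p q j)))
     \<ge> (2 * Re (\<Sum>k<2. \<Sum>l<2. f k l k l) - 5) * Re (Nf (\<lambda>i j. psv p q i * cnj (psv p q j) - phv p q i * cnj (phv p q j)))"
proof -
  define r where "r = (cmod p)^2 + (cmod q)^2"
  have R: "p * cnj p + q * cnj q = complex_of_real r" unfolding r_def by (rule cnj_R)
  define a where "a = Re (Kf f (psv p q) (psv p q) (psv p q) (psv p q))"
  define b where "b = Re (Kf f (phv p q) (phv p q) (phv p q) (phv p q))"
  define c where "c = Kf f (phv p q) (psv p q) (phv p q) (psv p q)"
  define d where "d = Kf f (psv p q) (phv p q) (psv p q) (phv p q)"
  have T: "r^2 * Re (\<Sum>k<2. \<Sum>l<2. f k l k l) = a + b + Re c + Re d"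
    using arg_cong[OF Kf_trace[of p q f], of Re] unfolding R a_def b_def c_def d_def by (simp flip: of_real_power)
  have G: "Re (Gf f (\<lambda>i j. psv p q i * cnj (psv p q j) - phv p q i * cnj (phv p q j))) = 2 * (a + b) - 2 * r^2"
    using arg_cong[OF Gf_H[OF U, of p q], of Re] unfolding R a_def b_def by (simp flip: of_real_power)
  have N: "Re (Nf (\<lambda>i j. psv p q i * cnj (psv p q j) - phv p q i * cnj (phv p q j))) = 2 * r^2"
    using arg_cong[OF Nf_H[of p q], of Re] unfolding R by (simp flip: of_real_power)
  have Sc: "r * r * a \<ge> (cmod c)^2"
    using S[where x="phv p q" and y="psv p q" and u="psv p q" and w="phv p q"] unfolding nv_phv a_def c_def r_def by simp
  have Sd: "r * r * b \<ge> (cmod d)^2"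
    using S[where x="psv p q" and y="phv p q" and u="phv p q" and w="psv p q"] unfolding nv_psv b_def d_def r_def by simp
  have c2: "(Re c)^2 \<le> (cmod c)^2" "(Re d)^2 \<le> (cmod d)^2"
    using power_mono[OF abs_Re_le_cmod[of c], of 2] power_mono[OF abs_Re_le_cmod[of d], of 2] by simp_all
  have sq: "(Re c + Re d)^2 / 2 \<le> (Re c)^2 + (Re d)^2"
    using sum_squares_ge_zero[of "Re c - Re d" 0]
    by (simp add: power2_eq_square algebra_simps)
  have h: "r^2 * (a + b) \<ge> (Re c + Re d)^2 / 2"
    using Sc Sd c2 sq by (simp add: power2_eq_square algebra_simps)
  have a0: "a \<ge> 0" "b \<ge> 0" using P unfolding a_def b_def by auto
  have "a + b - 2 * (Re c + Re d) + 2 * r^2 \<ge> 0"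
    by (rule sch_arith[OF _ _ h]) (use a0 in auto)
  then show ?thesis unfolding G N using T by (simp add: algebra_simps power2_eq_square)
qed



lemma Hz_decomp: "\<exists>p q. (\<lambda>i j. psv p q i * cnj (psv p q j) - phv p q i * cnj (phv p q j)) = Hz h z"
proof -
  define r where "r = sqrt (h^2 + (cmod z)^2)"
  have r0: "r \<ge> 0" unfolding r_def by simp
  have r2: "r^2 = h^2 + (cmod z)^2" unfolding r_def by simp
  have habs: "\<bar>h\<bar> \<le> r" unfolding r_def by (rule real_le_rsqrt) simp
  have hr: "h \<le> r" "- h \<le> r" using habs by linarith+
  have key: "\<And>p q. p * cnj p - q * cnj q = complex_of_real h \<Longrightarrow> 2 * p * cnj q = z \<Longrightarrow>
      (\<lambda>i j. psv p q i * cnj (psv p q j) - phv p q i * cnj (phv p q j)) = Hz h z"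
  proof -
    fix p q assume e1: "p * cnj p - q * cnj q = complex_of_real h" and e2: "2 * p * cnj q = z"
    have e3: "2 * q * cnj p = cnj z" using arg_cong[OF e2, of cnj] by (simp add: ac_simps)
    show "(\<lambda>i j. psv p q i * cnj (psv p q j) - phv p q i * cnj (phv p q j)) = Hz h z"
      unfolding psv_def phv_def v2_def Hz_def
      apply (rule ext, rule ext)
      subgoal for i j
        using e1 e2 e3 by (cases "i = 0"; cases "j = 0") (auto simp: algebra_simps)
      done
  qed
  show ?thesis
  proof (cases "r + h > 0")
    case True
    define p where "p = complex_of_real (sqrt ((r + h) / 2))"
    have pp: "p * cnj p = complex_of_real ((r + h) / 2)" unfolding p_def using True
      by (simp flip: of_real_mult)
    have pnz: "p \<noteq> 0" unfolding p_def using True by simp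
    define q where "q = cnj z / (2 * p)"
    have cp: "cnj p = p" unfolding p_def by simp
    have e2: "2 * p * cnj q = z" unfolding q_def using pnz cp by (simp add: field_simps)
    have qq: "q * cnj q = complex_of_real ((cmod z)^2 / (2 * (r + h)))"
    proof -
      have "q * cnj q = (cnj z * z) / (4 * (p * cnj p))" unfolding q_def using cp by (simp add: field_simps)
      also have "cnj z * z = complex_of_real ((cmod z)^2)" using complex_norm_square[of z] by (simp add: mult.commute)
      finally have "q * cnj q = complex_of_real ((cmod z)^2) / (complex_of_real (4 * ((r + h) / 2)))"
        unfolding pp by simp
      also have "\<dots> = complex_of_real ((cmod z)^2 / (4 * ((r + h) / 2)))"
        by (rule of_real_divide[symmetric])
      also have "4 * ((r + h) / 2) = 2 * (r + h)" by simp
      finally show ?thesis .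
    qed
    have "(r + h) / 2 - (cmod z)^2 / (2 * (r + h)) = h"
    proof -
      have "(cmod z)^2 = (r - h) * (r + h)" using r2 by (simp add: algebra_simps power2_eq_square)
      then show ?thesis using True by (simp add: field_simps)
    qed
    then have e1: "p * cnj p - q * cnj q = complex_of_real h" unfolding pp qq
      by (metis of_real_diff)
    show ?thesis using key[OF e1 e2] by blast
  next
    case False
    then have hr': "h = - r" using hr r0 by linarith
    then have "(cmod z)^2 = 0" using r2 by simp
    then have z0: "z = 0" by simp
    define q where "q = complex_of_real (sqrt r)"
    have qq: "q * cnj q = complex_of_real r" unfolding q_def using r0 by (simp flip: of_real_mult)
    have e1: "0 * cnj 0 - q * cnj q = complex_of_real h" unfolding qq hr' by simp
    have e2: "2 * 0 * cnj q = z" using z0 by simp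
    show ?thesis using key[OF e1 e2] by blast
  qed
qed



definition hermf :: "(nat \<Rightarrow> nat \<Rightarrow> nat \<Rightarrow> nat \<Rightarrow> complex) \<Rightarrow> bool" where
  "hermf f \<longleftrightarrow> (\<forall>i j k l. i < 2 \<longrightarrow> j < 2 \<longrightarrow> k < 2 \<longrightarrow> l < 2 \<longrightarrow> cnj (f i j k l) = f j i l k)"

lemma hermfD: "hermf f \<Longrightarrow> i < 2 \<Longrightarrow> j < 2 \<Longrightarrow> k < 2 \<Longrightarrow> l < 2 \<Longrightarrow> cnj (f i j k l) = f j i l k"
  unfolding hermf_def by blast

lemma Gf_conj: assumes "hermf f" shows "cnj (Gf f W) = Gf f (\<lambda>i j. cnj (W j i))"
  unfolding Gf_def sum2 by (simp add: hermfD[OF assms] algebra_simps)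

lemma Gf_pm: "Gf f (\<lambda>i j. A i j + \<i> * C i j) + Gf f (\<lambda>i j. A i j - \<i> * C i j) = 2 * Gf f A + 2 * Gf f C"
  unfolding Gf_def sum2 by (simp add: algebra_simps)

lemma Nf_pm: "Nf (\<lambda>i j. A i j + \<i> * C i j) + Nf (\<lambda>i j. A i j - \<i> * C i j) = 2 * Nf A + 2 * Nf C"
  unfolding Nf_def sum2 by (simp add: algebra_simps)

lemma Nf_conj: "Nf (\<lambda>i j. cnj (W j i)) = Nf W"
  unfolding Nf_def sum2 by (simp add: algebra_simps)

lemma Nf_real: "Nf W = complex_of_real (\<Sum>i<2. \<Sum>j<2. (cmod (W i j))^2)"
  unfolding Nf_def sum2 of_real_add complex_norm_square by (simp add: ac_simps)

lemma lt2: "i < (2::nat) \<Longrightarrow> i = 0 \<or> i = 1" by auto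

lemma eig_core:
  assumes U: "unitalf f" and Hm: "hermf f"
    and ev: "\<And>i j. i < 2 \<Longrightarrow> j < 2 \<Longrightarrow> (\<Sum>k<2. \<Sum>l<2. f i j k l * V k l) = lam * V i j"
    and nz: "\<not> (V 0 0 = 0 \<and> V 0 1 = 0 \<and> V 1 0 = 0 \<and> V 1 1 = 0)"
    and l1: "lam \<noteq> 1"
  shows "\<exists>h1 z1 h2 z2 n. n > 0 \<and> Re lam * n = Re (Gf f (Hz h1 z1)) + Re (Gf f (Hz h2 z2))
      \<and> n = Re (Nf (Hz h1 z1)) + Re (Nf (Hz h2 z2))"
proof -
  define t where "t = V 0 0 + V 1 1"
  define \<alpha> where "\<alpha> = (V 0 0 - V 1 1) / 2"
  define \<beta> where "\<beta> = V 0 1"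
  define \<gamma> where "\<gamma> = V 1 0"
  define W where "W = (\<lambda>i j::nat. if (i::nat) = 0 then (if j = 0 then \<alpha> else \<beta>) else (if j = 0 then \<gamma> else - \<alpha>))"
  note UD = unitalfD[OF U]
  have inner: "(\<Sum>k<2. \<Sum>l<2. f i j k l * W k l) = lam * V i j - (t/2) * (if i = j then 1 else 0)"
    if i: "i < 2" and j: "j < 2" for i j
  proof -
    have e: "f i j 0 0 * V 0 0 + f i j 0 1 * V 0 1 + f i j 1 0 * V 1 0 + f i j 1 1 * V 1 1 = lam * V i j"
      using ev[OF i j] unfolding sum2 by (simp add: add.assoc)
    have d: "f i j 0 0 + f i j 1 1 = (if i = j then 1 else 0)"
      using lt2[OF i] lt2[OF j] UD by auto
    have "(\<Sum>k<2. \<Sum>l<2. f i j k l * W k l) =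
        (f i j 0 0 * V 0 0 + f i j 0 1 * V 0 1 + f i j 1 0 * V 1 0 + f i j 1 1 * V 1 1) - (t/2) * (f i j 0 0 + f i j 1 1)"
      unfolding sum2 W_def \<alpha>_def \<beta>_def \<gamma>_def t_def by (simp add: field_simps)
    then show ?thesis unfolding e d .
  qed
  have G: "Gf f W = lam * Nf W"
  proof -
    have "Gf f W = (\<Sum>i<2. \<Sum>j<2. cnj (W i j) * (\<Sum>k<2. \<Sum>l<2. f i j k l * W k l))"
      unfolding Gf_def by (simp add: sum_distrib_left mult.assoc)
    also have "\<dots> = (\<Sum>i<2. \<Sum>j<2. cnj (W i j) * (lam * V i j - (t/2) * (if i = j then 1 else 0)))"
      by (rule sum.cong[OF refl], rule sum.cong[OF refl], simp add: inner)
    also have "\<dots> = lam * Nf W"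
      unfolding Nf_def sum2 W_def \<alpha>_def \<beta>_def \<gamma>_def t_def by (simp add: field_simps)
    finally show ?thesis .
  qed
  define n where "n = (\<Sum>i<2. \<Sum>j<2. (cmod (W i j))^2)"
  have N: "Nf W = complex_of_real n" unfolding n_def by (rule Nf_real)
  have Wnz: "\<not> (\<alpha> = 0 \<and> \<beta> = 0 \<and> \<gamma> = 0)"
  proof
    assume a: "\<alpha> = 0 \<and> \<beta> = 0 \<and> \<gamma> = 0"
    then have v: "V 0 1 = 0" "V 1 0 = 0" "V 1 1 = V 0 0" unfolding \<alpha>_def \<beta>_def \<gamma>_def by auto
    have "f 0 0 0 0 * V 0 0 + f 0 0 1 1 * V 0 0 = lam * V 0 0"
      using ev[of 0 0] v unfolding sum2 by simp
    then have "V 0 0 = lam * V 0 0" using UD by (simp add: algebra_simps)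
    then have "V 0 0 = 0" using l1 by (metis mult_cancel_right2)
    then show False using nz v by simp
  qed
  have npos: "n > 0"
  proof -
    have "n = (cmod \<alpha>)^2 + (cmod \<beta>)^2 + (cmod \<gamma>)^2 + (cmod \<alpha>)^2"
      unfolding n_def sum2 W_def by simp
    moreover have "(cmod \<alpha>)^2 + (cmod \<beta>)^2 + (cmod \<gamma>)^2 > 0"
      using Wnz by (metis add_nonneg_nonneg add_pos_nonneg norm_eq_zero zero_le_power2 zero_less_power2
          add.commute)
    ultimately show ?thesis by (smt (verit) zero_le_power2)
  qed
  define H1 where "H1 = Hz (Re \<alpha>) ((\<beta> + cnj \<gamma>) / 2)"
  define H2 where "H2 = Hz (Im \<alpha>) ((\<beta> - cnj \<gamma>) / (2 * \<i>))"
  have W1: "W = (\<lambda>i j. H1 i j + \<i> * H2 i j)"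
    unfolding W_def H1_def H2_def Hz_def
    apply (rule ext, rule ext)
    subgoal for i j by (cases "i = 0"; cases "j = 0") (auto simp: field_simps complex_eq_iff)
    done
  have W2: "(\<lambda>i j. cnj (W j i)) = (\<lambda>i j. H1 i j - \<i> * H2 i j)"
    unfolding W_def H1_def H2_def Hz_def
    apply (rule ext, rule ext)
    subgoal for i j by (cases "i = 0"; cases "j = 0") (auto simp: field_simps complex_eq_iff)
    done
  have "Gf f W + cnj (Gf f W) = 2 * Gf f H1 + 2 * Gf f H2"
    unfolding Gf_conj[OF Hm] W2 by (subst (1) W1, rule Gf_pm)
  then have "Re (Gf f W + cnj (Gf f W)) = 2 * Re (Gf f H1) + 2 * Re (Gf f H2)" by simp
  then have g: "Re lam * n = Re (Gf f H1) + Re (Gf f H2)"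
    unfolding G N by (simp add: algebra_simps)
  have "Nf W + Nf (\<lambda>i j. cnj (W j i)) = 2 * Nf H1 + 2 * Nf H2"
    unfolding W2 by (subst (1) W1, rule Nf_pm)
  then have "Re (Nf W + Nf (\<lambda>i j. cnj (W j i))) = 2 * Re (Nf H1) + 2 * Re (Nf H2)" by simp
  then have nn: "n = Re (Nf H1) + Re (Nf H2)" unfolding Nf_conj N by simp
  show ?thesis using npos g nn unfolding H1_def H2_def by blast
qed



lemma core_bound:
  assumes core: "\<exists>h1 z1 h2 z2 n. n > 0 \<and> Re lam * n = Re (Gf f (Hz h1 z1)) + Re (Gf f (Hz h2 z2))
      \<and> n = Re (Nf (Hz h1 z1)) + Re (Nf (Hz h2 z2))"
    and b: "\<And>h z. c1 * Re (Gf f (Hz h z)) \<ge> c0 * Re (Nf (Hz h z))"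
  shows "c1 * Re lam \<ge> c0"
proof -
  obtain h1 z1 h2 z2 n where n: "n > 0" and g: "Re lam * n = Re (Gf f (Hz h1 z1)) + Re (Gf f (Hz h2 z2))"
    and nn: "n = Re (Nf (Hz h1 z1)) + Re (Nf (Hz h2 z2))" using core by blast
  have e1: "c1 * (Re lam * n) = c1 * Re (Gf f (Hz h1 z1)) + c1 * Re (Gf f (Hz h2 z2))"
    using g by (simp add: algebra_simps)
  have e2: "c0 * n = c0 * Re (Nf (Hz h1 z1)) + c0 * Re (Nf (Hz h2 z2))"
    using nn by (simp add: algebra_simps)
  have "c1 * (Re lam * n) \<ge> c0 * n" unfolding e1 e2 using b[of h1 z1] b[of h2 z2] by linarith
  then have "(c1 * Re lam) * n \<ge> c0 * n" by (simp add: algebra_simps)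
  then show ?thesis using n by simp
qed

lemma core_bound_up:
  assumes core: "\<exists>h1 z1 h2 z2 n. n > 0 \<and> Re lam * n = Re (Gf f (Hz h1 z1)) + Re (Gf f (Hz h2 z2))
      \<and> n = Re (Nf (Hz h1 z1)) + Re (Nf (Hz h2 z2))"
    and b: "\<And>h z. Re (Gf f (Hz h z)) \<le> Re (Nf (Hz h z))"
  shows "Re lam \<le> 1"
proof -
  obtain h1 z1 h2 z2 n where n: "n > 0" and g: "Re lam * n = Re (Gf f (Hz h1 z1)) + Re (Gf f (Hz h2 z2))"
    and nn: "n = Re (Nf (Hz h1 z1)) + Re (Nf (Hz h2 z2))" using core by blast
  have "Re lam * n \<le> 1 * n" using g nn b[of h1 z1] b[of h2 z2] by linarith
  then show ?thesis using n by simp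
qed

lemma eig_up:
  assumes U: "unitalf f" and Hm: "hermf f" and P: "\<And>u x. Re (Kf f u u x x) \<ge> 0"
    and ev: "\<And>i j. i < 2 \<Longrightarrow> j < 2 \<Longrightarrow> (\<Sum>k<2. \<Sum>l<2. f i j k l * V k l) = lam * V i j"
    and nz: "\<not> (V 0 0 = 0 \<and> V 0 1 = 0 \<and> V 1 0 = 0 \<and> V 1 1 = 0)"
    and l1: "lam \<noteq> 1"
  shows "Re lam \<le> 1"
proof (rule core_bound_up[OF eig_core[OF U Hm ev nz l1]])
  fix h z
  obtain p q where e: "(\<lambda>i j. psv p q i * cnj (psv p q j) - phv p q i * cnj (phv p q j)) = Hz h z"
    using Hz_decomp by blast
  show "Re (Gf f (Hz h z)) \<le> Re (Nf (Hz h z))" using H_upper[OF U P, of p q] unfolding e .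
qed

lemma eig_cp:
  assumes U: "unitalf f" and Hm: "hermf f"
    and C: "\<And>uA uB zA zB. Re (Kf f uA uA zA zA + Kf f uA uB zA zB + Kf f uB uA zB zA + Kf f uB uB zB zB) \<ge> 0"
    and ev: "\<And>i j. i < 2 \<Longrightarrow> j < 2 \<Longrightarrow> (\<Sum>k<2. \<Sum>l<2. f i j k l * V k l) = lam * V i j"
    and nz: "\<not> (V 0 0 = 0 \<and> V 0 1 = 0 \<and> V 1 0 = 0 \<and> V 1 1 = 0)"
    and l1: "lam \<noteq> 1"
  shows "2 * Re lam \<ge> Re (\<Sum>k<2. \<Sum>l<2. f k l k l) - 2"
proof (rule core_bound[OF eig_core[OF U Hm ev nz l1]])
  fix h z
  obtain p q where e: "(\<lambda>i j. psv p q i * cnj (psv p q j) - phv p q i * cnj (phv p q j)) = Hz h z"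
    using Hz_decomp by blast
  show "2 * Re (Gf f (Hz h z)) \<ge> (Re (\<Sum>k<2. \<Sum>l<2. f k l k l) - 2) * Re (Nf (Hz h z))"
    using H_cp[OF U C, of p q] unfolding e .
qed

lemma eig_sch:
  assumes U: "unitalf f" and Hm: "hermf f" and P: "\<And>u x. Re (Kf f u u x x) \<ge> 0"
    and S: "\<And>x y u w. nv x * nv w * Re (Kf f u u y y) \<ge> (cmod (Kf f w u x y))^2"
    and ev: "\<And>i j. i < 2 \<Longrightarrow> j < 2 \<Longrightarrow> (\<Sum>k<2. \<Sum>l<2. f i j k l * V k l) = lam * V i j"
    and nz: "\<not> (V 0 0 = 0 \<and> V 0 1 = 0 \<and> V 1 0 = 0 \<and> V 1 1 = 0)"
    and l1: "lam \<noteq> 1"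
  shows "3 * Re lam \<ge> 2 * Re (\<Sum>k<2. \<Sum>l<2. f k l k l) - 5"
proof (rule core_bound[OF eig_core[OF U Hm ev nz l1]])
  fix h z
  obtain p q where e: "(\<lambda>i j. psv p q i * cnj (psv p q j) - phv p q i * cnj (phv p q j)) = Hz h z"
    using Hz_decomp by blast
  show "3 * Re (Gf f (Hz h z)) \<ge> (2 * Re (\<Sum>k<2. \<Sum>l<2. f k l k l) - 5) * Re (Nf (Hz h z))"
    using H_sch[OF U P S, of p q] unfolding e .
qed




definition E2 :: "nat \<Rightarrow> nat \<Rightarrow> complex mat" where
  "E2 k l = mat 2 2 (\<lambda>(a,b). if (a,b) = (k,l) then 1 else 0)"

definition fco :: "(complex mat \<Rightarrow> complex mat) \<Rightarrow> nat \<Rightarrow> nat \<Rightarrow> nat \<Rightarrow> nat \<Rightarrow> complex" where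
  "fco \<Phi> i j k l = \<Phi> (E2 k l) $$ (i,j)"


lemma E2_carrier[simp]: "E2 k l \<in> carrier_mat 2 2" unfolding E2_def by simp
lemma E2_dim[simp]: "dim_row (E2 k l) = 2" "dim_col (E2 k l) = 2" unfolding E2_def by simp_all

lemma decomp2:
  assumes X: "X \<in> carrier_mat 2 2"
  shows "X = X $$ (0,0) \<cdot>\<^sub>m E2 0 0 + X $$ (0,1) \<cdot>\<^sub>m E2 0 1 + X $$ (1,0) \<cdot>\<^sub>m E2 1 0 + X $$ (1,1) \<cdot>\<^sub>m E2 1 1"
  (is "X = ?R")
proof (rule eq_matI)
  show "dim_row X = dim_row ?R" "dim_col X = dim_col ?R" using X by auto
  fix i j assume "i < dim_row ?R" "j < dim_col ?R"
  then have i: "i < 2" and j: "j < 2" by auto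
  show "X $$ (i,j) = ?R $$ (i,j)" using lt2[OF i] lt2[OF j] i j unfolding E2_def by auto
qed

lemma phi_entry:
  assumes L: "linear_map_M2 \<Phi>" and X: "X \<in> carrier_mat 2 2" and i: "i < 2" and j: "j < 2"
  shows "\<Phi> X $$ (i,j) = (\<Sum>k<2. \<Sum>l<2. fco \<Phi> i j k l * X $$ (k,l))"
proof -
  have C: "\<And>Y. Y \<in> carrier_mat 2 2 \<Longrightarrow> \<Phi> Y \<in> carrier_mat 2 2"
    and A: "\<And>Y Z. Y \<in> carrier_mat 2 2 \<Longrightarrow> Z \<in> carrier_mat 2 2 \<Longrightarrow> \<Phi> (Y + Z) = \<Phi> Y + \<Phi> Z"
    and S: "\<And>c Y. Y \<in> carrier_mat 2 2 \<Longrightarrow> \<Phi> (c \<cdot>\<^sub>m Y) = c \<cdot>\<^sub>m \<Phi> Y"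
    using L unfolding linear_map_M2_def by auto
  let ?a = "X $$ (0,0)" and ?b = "X $$ (0,1)" and ?c = "X $$ (1,0)" and ?d = "X $$ (1,1)"
  have "\<Phi> X = \<Phi> (?a \<cdot>\<^sub>m E2 0 0 + ?b \<cdot>\<^sub>m E2 0 1 + ?c \<cdot>\<^sub>m E2 1 0 + ?d \<cdot>\<^sub>m E2 1 1)"
    using decomp2[OF X] by simp
  also have "\<dots> = ?a \<cdot>\<^sub>m \<Phi> (E2 0 0) + ?b \<cdot>\<^sub>m \<Phi> (E2 0 1) + ?c \<cdot>\<^sub>m \<Phi> (E2 1 0) + ?d \<cdot>\<^sub>m \<Phi> (E2 1 1)"
    by (simp add: A S)
  finally have e: "\<Phi> X = ?a \<cdot>\<^sub>m \<Phi> (E2 0 0) + ?b \<cdot>\<^sub>m \<Phi> (E2 0 1) + ?c \<cdot>\<^sub>m \<Phi> (E2 1 0) + ?d \<cdot>\<^sub>m \<Phi> (E2 1 1)" .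
  have c: "\<Phi> (E2 k l) \<in> carrier_mat 2 2" for k l using C by simp
  show ?thesis unfolding e using c[of 0 0] c[of 0 1] c[of 1 0] c[of 1 1] i j
    unfolding sum2 fco_def by (simp add: ac_simps)
qed

definition opm :: "(nat \<Rightarrow> complex) \<Rightarrow> (nat \<Rightarrow> complex) \<Rightarrow> complex mat" where
  "opm x y = mat 2 2 (\<lambda>(i,j). x i * cnj (y j))"

definition qf :: "(nat \<Rightarrow> complex) \<Rightarrow> complex mat \<Rightarrow> (nat \<Rightarrow> complex) \<Rightarrow> complex" where
  "qf u A w = (\<Sum>i<2. \<Sum>j<2. cnj (u i) * A $$ (i,j) * w j)"

lemma opm_carrier[simp]: "opm x y \<in> carrier_mat 2 2" unfolding opm_def by simp

lemma qf_phi_opm: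
  assumes L: "linear_map_M2 \<Phi>"
  shows "qf u (\<Phi> (opm x y)) w = Kf (fco \<Phi>) u w x y"
proof -
  have "qf u (\<Phi> (opm x y)) w = (\<Sum>i<2. \<Sum>j<2. cnj (u i) * (\<Sum>k<2. \<Sum>l<2. fco \<Phi> i j k l * opm x y $$ (k,l)) * w j)"
    unfolding qf_def by (intro sum.cong refl, simp add: phi_entry[OF L])
  also have "\<dots> = Kf (fco \<Phi>) u w x y"
    unfolding Kf_def sum2 opm_def by (simp add: algebra_simps)
  finally show ?thesis .
qed

lemma psd_outer:
  fixes z :: "nat \<Rightarrow> complex"
  shows "psd n (mat n n (\<lambda>(i,j). z i * cnj (z j)))"
proof -
  let ?A = "mat n n (\<lambda>(i,j). z i * cnj (z j))"
  have adj: "adj_mat ?A = ?A" unfolding adj_mat_def by (rule eq_matI) auto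
  have q: "Re (\<Sum>i<n. \<Sum>j<n. cnj (v i) * ?A $$ (i,j) * v j) \<ge> 0" for v :: "nat \<Rightarrow> complex"
  proof -
    define s where "s = (\<Sum>i<n. cnj (v i) * z i)"
    have cs: "cnj s = (\<Sum>j<n. v j * cnj (z j))" unfolding s_def by simp
    have "(\<Sum>i<n. \<Sum>j<n. cnj (v i) * ?A $$ (i,j) * v j) = (\<Sum>i<n. \<Sum>j<n. (cnj (v i) * z i) * (v j * cnj (z j)))"
      by (intro sum.cong refl) (simp add: ac_simps)
    also have "\<dots> = s * cnj s" unfolding cs s_def by (simp add: sum_product)
    also have "\<dots> = complex_of_real ((cmod s)^2)" by (rule complex_norm_square[symmetric])
    finally show ?thesis by simp
  qed
  show ?thesis unfolding psd_def using adj q by auto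
qed

lemma psd_opm: "psd 2 (opm x x)"
  unfolding opm_def by (rule psd_outer)

lemma psd_herm:
  assumes "psd 2 A" "i < 2" "j < 2"
  shows "cnj (A $$ (j,i)) = A $$ (i,j)"
proof -
  have A: "A \<in> carrier_mat 2 2" and h: "adj_mat A = A" using assms(1) unfolding psd_def by auto
  have "adj_mat A $$ (i,j) = cnj (A $$ (j,i))" unfolding adj_mat_def using A assms by auto
  then show ?thesis using h by simp
qed

lemma psd_qf: "psd 2 A \<Longrightarrow> Re (qf u A u) \<ge> 0"
  unfolding psd_def qf_def by auto



lemma unital_fco:
  assumes L: "linear_map_M2 \<Phi>" and U: "unital_M2 \<Phi>"
  shows "unitalf (fco \<Phi>)"
proof -
  have e: "fco \<Phi> i j 0 0 + fco \<Phi> i j 1 1 = (if i = j then 1 else 0)" if "i < 2" "j < 2" for i j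
  proof -
    have "\<Phi> (1\<^sub>m 2) $$ (i,j) = (\<Sum>k<2. \<Sum>l<2. fco \<Phi> i j k l * (1\<^sub>m 2) $$ (k,l))"
      using phi_entry[OF L _ that] by simp
    also have "\<dots> = fco \<Phi> i j 0 0 + fco \<Phi> i j 1 1" unfolding sum2 by simp
    finally show ?thesis using U that unfolding unital_M2_def by simp
  qed
  show ?thesis unfolding unitalf_def using e[of 0 0] e[of 0 1] e[of 1 0] e[of 1 1]
    by (auto simp: eq_diff_eq eq_neg_iff_add_eq_0 add.commute)
qed

lemma opm_entry: "i < 2 \<Longrightarrow> j < 2 \<Longrightarrow> opm x y $$ (i,j) = x i * cnj (y j)"
  unfolding opm_def by simp

lemma hermf_from:
  assumes H: "\<And>y i j. i < 2 \<Longrightarrow> j < 2 \<Longrightarrow>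
     cnj (\<Sum>k<2. \<Sum>l<2. f j i k l * (y k * cnj (y l))) = (\<Sum>k<2. \<Sum>l<2. f i j k l * (y k * cnj (y l)))"
  shows "hermf f"
proof -
  have main: "cnj (f j i 0 0) = f i j 0 0 \<and> cnj (f j i 1 1) = f i j 1 1 \<and> cnj (f j i 0 1) = f i j 1 0"
    if i: "i < 2" and j: "j < 2" for i j
  proof -
    have a: "cnj (f j i 0 0) = f i j 0 0" using H[OF i j, of "v2 1 0"] unfolding sum2 v2_def by simp
    have b: "cnj (f j i 1 1) = f i j 1 1" using H[OF i j, of "v2 0 1"] unfolding sum2 v2_def by simp
    have c: "cnj (f j i 0 1) + cnj (f j i 1 0) = f i j 0 1 + f i j 1 0"
      using H[OF i j, of "v2 1 1"] a b unfolding sum2 v2_def by simp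
    have d: "\<i> * cnj (f j i 0 1) - \<i> * cnj (f j i 1 0) = \<i> * f i j 1 0 - \<i> * f i j 0 1"
      using H[OF i j, of "v2 1 \<i>"] a b unfolding sum2 v2_def by (simp add: algebra_simps)
    then have "\<i> * (cnj (f j i 0 1) - cnj (f j i 1 0)) = \<i> * (f i j 1 0 - f i j 0 1)"
      by (simp add: algebra_simps)
    then have d': "cnj (f j i 0 1) - cnj (f j i 1 0) = f i j 1 0 - f i j 0 1"
      by simp
    have "cnj (f j i 0 1) = ((cnj (f j i 0 1) + cnj (f j i 1 0)) + (cnj (f j i 0 1) - cnj (f j i 1 0))) / 2"
      by simp
    also have "\<dots> = ((f i j 0 1 + f i j 1 0) + (f i j 1 0 - f i j 0 1)) / 2" unfolding c d' ..
    also have "\<dots> = f i j 1 0" by simp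
    finally have "cnj (f j i 0 1) = f i j 1 0" .
    then show ?thesis using a b by simp
  qed
  show ?thesis unfolding hermf_def
  proof (intro allI impI)
    fix i j k l :: nat assume i: "i < 2" and j: "j < 2" and k: "k < 2" and l: "l < 2"
    have m1: "cnj (f i j 0 0) = f j i 0 0" "cnj (f i j 1 1) = f j i 1 1" "cnj (f i j 0 1) = f j i 1 0"
      using main[OF j i] by auto
    have "cnj (f j i 0 1) = f i j 1 0" using main[OF i j] by auto
    then have m2: "cnj (f i j 1 0) = f j i 0 1" by (metis complex_cnj_cnj)
    show "cnj (f i j k l) = f j i l k"
      using lt2[OF k] lt2[OF l] m1 m2 by auto
  qed
qed



lemma phi_opm_entry:
  assumes L: "linear_map_M2 \<Phi>" and i: "i < 2" and j: "j < 2"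
  shows "\<Phi> (opm x y) $$ (i,j) = (\<Sum>k<2. \<Sum>l<2. fco \<Phi> i j k l * (x k * cnj (y l)))"
  unfolding phi_entry[OF L opm_carrier i j] by (intro sum.cong refl) (simp add: opm_entry)

lemma pos_facts:
  assumes L: "linear_map_M2 \<Phi>" and PP: "\<And>y. psd 2 (\<Phi> (opm y y))"
  shows "\<And>u x. Re (Kf (fco \<Phi>) u u x x) \<ge> 0" and "hermf (fco \<Phi>)"
proof -
  fix u x show "Re (Kf (fco \<Phi>) u u x x) \<ge> 0"
    using psd_qf[OF PP[of x], of u] unfolding qf_phi_opm[OF L] .
next
  show "hermf (fco \<Phi>)"
  proof (rule hermf_from)
    fix y :: "nat \<Rightarrow> complex" and i j :: nat assume i: "i < 2" and j: "j < 2"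
    show "cnj (\<Sum>k<2. \<Sum>l<2. fco \<Phi> j i k l * (y k * cnj (y l))) = (\<Sum>k<2. \<Sum>l<2. fco \<Phi> i j k l * (y k * cnj (y l)))"
      using psd_herm[OF PP[of y] i j] unfolding phi_opm_entry[OF L i j] phi_opm_entry[OF L j i] .
  qed
qed

lemma positive_PP:
  assumes "positive_map \<Phi>" shows "psd 2 (\<Phi> (opm y y))"
  using assms psd_opm unfolding positive_map_def by blast

lemma block2_2: "X \<in> carrier_mat 2 2 \<Longrightarrow> block2 X 0 0 = X"
  unfolding block2_def by (rule eq_matI) auto

lemma ampliate1:
  assumes L: "linear_map_M2 \<Phi>" and X: "X \<in> carrier_mat 2 2"
  shows "ampliate 1 \<Phi> X = \<Phi> X"
proof -
  have C: "\<Phi> X \<in> carrier_mat 2 2" using L X unfolding linear_map_M2_def by auto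
  show ?thesis unfolding ampliate_def
    by (rule eq_matI) (use C X in \<open>auto simp: block2_2\<close>)
qed

lemma cp_PP:
  assumes L: "linear_map_M2 \<Phi>" and CP: "completely_positive \<Phi>" shows "psd 2 (\<Phi> (opm y y))"
proof -
  have r: "psd (2*1) (opm y y) \<longrightarrow> psd (2*1) (ampliate 1 \<Phi> (opm y y))"
    using CP unfolding completely_positive_def by blast
  have "psd (2*1) (ampliate 1 \<Phi> (opm y y))" using r psd_opm[of y] by simp
  then show ?thesis unfolding ampliate1[OF L opm_carrier] by simp
qed

lemma sum4: "(\<Sum>a<4. g a) = g 0 + g 1 + g 2 + g (3::nat)"
  by (simp add: eval_nat_numeral)

lemma cp_choi:
  assumes L: "linear_map_M2 \<Phi>" and CP: "completely_positive \<Phi>"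
  shows "Re (Kf (fco \<Phi>) uA uA zA zA + Kf (fco \<Phi>) uA uB zA zB + Kf (fco \<Phi>) uB uA zB zA + Kf (fco \<Phi>) uB uB zB zB) \<ge> 0"
proof -
  define \<zeta> where "\<zeta> = (\<lambda>a::nat. if a < 2 then zA a else zB (a - 2))"
  define v where "v = (\<lambda>a::nat. if a < 2 then uA a else uB (a - 2))"
  define Z where "Z = mat 4 4 (\<lambda>(a,b). \<zeta> a * cnj (\<zeta> b))"
  have "psd (2*2) Z" unfolding Z_def by (simp add: psd_outer)
  then have ps: "psd 4 (ampliate 2 \<Phi> Z)" using CP unfolding completely_positive_def by fastforce
  have b: "block2 Z 0 0 = opm zA zA" "block2 Z 0 1 = opm zA zB" "block2 Z 1 0 = opm zB zA" "block2 Z 1 1 = opm zB zB"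
    unfolding block2_def opm_def Z_def \<zeta>_def by (auto intro!: eq_matI)
  have "Re (\<Sum>a<4. \<Sum>b<4. cnj (v a) * ampliate 2 \<Phi> Z $$ (a,b) * v b) \<ge> 0"
    using ps unfolding psd_def by auto
  also have "(\<Sum>a<4. \<Sum>b<4. cnj (v a) * ampliate 2 \<Phi> Z $$ (a,b) * v b) =
     qf uA (\<Phi> (opm zA zA)) uA + qf uA (\<Phi> (opm zA zB)) uB + qf uB (\<Phi> (opm zB zA)) uA + qf uB (\<Phi> (opm zB zB)) uB"
    unfolding sum4 qf_def sum2 ampliate_def v_def by (simp add: b[simplified] algebra_simps)
  finally show ?thesis unfolding qf_phi_opm[OF L] by simp
qed



lemma mult22:
  assumes "A \<in> carrier_mat 2 2" "B \<in> carrier_mat 2 2" "i < 2" "j < 2"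
  shows "(A * B) $$ (i,j) = (\<Sum>m<2. A $$ (i,m) * B $$ (m,j))"
  using assms by (simp add: scalar_prod_def lessThan_atLeast0)

lemma adj22:
  assumes "A \<in> carrier_mat 2 2"
  shows "adj_mat A \<in> carrier_mat 2 2" "i < 2 \<Longrightarrow> j < 2 \<Longrightarrow> adj_mat A $$ (i,j) = cnj (A $$ (j,i))"
  using assms unfolding adj_mat_def by auto

lemma cs2: "(cmod (cnj a * b + cnj c * d))^2 \<le> ((cmod a)^2 + (cmod c)^2) * ((cmod b)^2 + (cmod d)^2)"
proof -
  have t: "cmod (cnj a * b + cnj c * d) \<le> cmod a * cmod b + cmod c * cmod d"
    by (metis complex_mod_cnj norm_mult norm_triangle_ineq)
  have "(cmod (cnj a * b + cnj c * d))^2 \<le> (cmod a * cmod b + cmod c * cmod d)^2"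
    by (rule power_mono[OF t]) simp
  also have "\<dots> \<le> ((cmod a)^2 + (cmod c)^2) * ((cmod b)^2 + (cmod d)^2)"
  proof -
    have "0 \<le> (cmod a * cmod d - cmod c * cmod b)^2" by simp
    then show ?thesis by (simp add: algebra_simps power2_eq_square)
  qed
  finally show ?thesis .
qed

lemma sch_core:
  assumes L: "linear_map_M2 \<Phi>" and Sch: "schwarz_map \<Phi>"
  shows "nv x * Re (Kf (fco \<Phi>) u u y y) \<ge> (\<Sum>m<2. (cmod (\<Sum>j<2. \<Phi> (opm x y) $$ (m,j) * u j))^2)"
    and "qf w (\<Phi> (opm x y)) u = (\<Sum>m<2. cnj (w m) * (\<Sum>j<2. \<Phi> (opm x y) $$ (m,j) * u j))"
    and "i < 2 \<Longrightarrow> j < 2 \<Longrightarrow> cnj (\<Phi> (adj_mat (opm x y) * opm x y) $$ (j,i)) = \<Phi> (adj_mat (opm x y) * opm x y) $$ (i,j)"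
    and "i < 2 \<Longrightarrow> j < 2 \<Longrightarrow> \<Phi> (adj_mat (opm x y) * opm x y) $$ (i,j) = complex_of_real (nv x) * (\<Sum>k<2. \<Sum>l<2. fco \<Phi> i j k l * (y k * cnj (y l)))"
proof -
  let ?X = "opm x y"
  let ?G = "\<Phi> ?X"
  let ?Y = "adj_mat ?X * ?X"
  let ?D = "\<Phi> ?Y - adj_mat ?G * ?G"
  have GC: "?G \<in> carrier_mat 2 2" using L unfolding linear_map_M2_def by auto
  have YC: "?Y \<in> carrier_mat 2 2" using adj22(1)[OF opm_carrier[of x y]] opm_carrier[of x y] by (rule mult_carrier_mat)
  have PYC: "\<Phi> ?Y \<in> carrier_mat 2 2" using L YC unfolding linear_map_M2_def by auto
  have AGC: "adj_mat ?G * ?G \<in> carrier_mat 2 2" using adj22(1)[OF GC] GC by simp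
  have psdD: "psd 2 ?D" using Sch unfolding schwarz_map_def by auto
  have nvx: "(\<Sum>m<2. cnj (x m) * x m) = complex_of_real (nv x)"
    unfolding nv_def sum2 of_real_add complex_norm_square by (simp add: ac_simps)
  have Yent: "?Y $$ (k,l) = complex_of_real (nv x) * (y k * cnj (y l))" if "k < 2" "l < 2" for k l
  proof -
    have "?Y $$ (k,l) = (\<Sum>m<2. cnj (x m * cnj (y k)) * (x m * cnj (y l)))"
      using that by (simp add: mult22 adj22 opm_entry)
    also have "\<dots> = (\<Sum>m<2. cnj (x m) * x m) * (y k * cnj (y l))"
      unfolding sum2 by (simp add: algebra_simps)
    finally show ?thesis unfolding nvx .
  qed
  have PY: "\<Phi> ?Y $$ (i,j) = complex_of_real (nv x) * (\<Sum>k<2. \<Sum>l<2. fco \<Phi> i j k l * (y k * cnj (y l)))"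
    if "i < 2" "j < 2" for i j
  proof -
    have "\<Phi> ?Y $$ (i,j) = (\<Sum>k<2. \<Sum>l<2. fco \<Phi> i j k l * (complex_of_real (nv x) * (y k * cnj (y l))))"
      unfolding phi_entry[OF L YC that] by (intro sum.cong refl) (simp add: Yent)
    also have "\<dots> = complex_of_real (nv x) * (\<Sum>k<2. \<Sum>l<2. fco \<Phi> i j k l * (y k * cnj (y l)))"
      unfolding sum2 by (simp add: algebra_simps)
    finally show ?thesis .
  qed
  then show "i < 2 \<Longrightarrow> j < 2 \<Longrightarrow> \<Phi> ?Y $$ (i,j) = complex_of_real (nv x) * (\<Sum>k<2. \<Sum>l<2. fco \<Phi> i j k l * (y k * cnj (y l)))" .
  define g where "g = (\<lambda>m. \<Sum>j<2. ?G $$ (m,j) * u j)"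
  have qGG: "qf u (adj_mat ?G * ?G) u = (\<Sum>m<2. cnj (g m) * g m)"
    unfolding qf_def g_def sum2 using GC by (simp add: mult22 adj22 sum2 algebra_simps)
  have qGG': "qf u (adj_mat ?G * ?G) u = complex_of_real (\<Sum>m<2. (cmod (g m))^2)"
    unfolding qGG sum2 of_real_add complex_norm_square by (simp add: ac_simps)
  have qY: "qf u (\<Phi> ?Y) u = complex_of_real (nv x) * Kf (fco \<Phi>) u u y y"
    unfolding qf_def sum2 Kf_def using PY by (simp add: sum2 algebra_simps)
  have mD: "?D $$ (i,j) = \<Phi> ?Y $$ (i,j) - (adj_mat ?G * ?G) $$ (i,j)" if "i < 2" "j < 2" for i j
    using that carrier_matD[OF AGC] by simp
  have qD: "qf u ?D u = qf u (\<Phi> ?Y) u - qf u (adj_mat ?G * ?G) u"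
    unfolding qf_def sum2 by (simp add: mD algebra_simps)
  have "Re (qf u ?D u) \<ge> 0" by (rule psd_qf[OF psdD])
  then show "nv x * Re (Kf (fco \<Phi>) u u y y) \<ge> (\<Sum>m<2. (cmod (\<Sum>j<2. ?G $$ (m,j) * u j))^2)"
    unfolding qD qY qGG' g_def by simp
  show "qf w ?G u = (\<Sum>m<2. cnj (w m) * (\<Sum>j<2. ?G $$ (m,j) * u j))"
    unfolding qf_def sum2 by (simp add: algebra_simps)
  assume i: "i < 2" and j: "j < 2"
  have hD: "cnj (?D $$ (j,i)) = ?D $$ (i,j)" by (rule psd_herm[OF psdD i j])
  have hG: "cnj ((adj_mat ?G * ?G) $$ (j,i)) = (adj_mat ?G * ?G) $$ (i,j)"
    using GC i j by (simp add: mult22 adj22 sum2 mult.commute)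
  have e1: "?D $$ (i,j) = \<Phi> ?Y $$ (i,j) - (adj_mat ?G * ?G) $$ (i,j)" using i j carrier_matD[OF AGC] by simp
  have e2: "?D $$ (j,i) = \<Phi> ?Y $$ (j,i) - (adj_mat ?G * ?G) $$ (j,i)" using i j carrier_matD[OF AGC] by simp
  show "cnj (\<Phi> ?Y $$ (j,i)) = \<Phi> ?Y $$ (i,j)"
    using hD hG unfolding e1 e2 by (metis complex_cnj_diff diff_add_cancel)
qed



lemma nv_e0: "nv (v2 1 0) = 1" unfolding nv_def sum2 v2_def by simp

lemma sch_facts:
  assumes L: "linear_map_M2 \<Phi>" and Sch: "schwarz_map \<Phi>"
  shows "\<And>x y u w. nv x * nv w * Re (Kf (fco \<Phi>) u u y y) \<ge> (cmod (Kf (fco \<Phi>) w u x y))^2"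
    and "\<And>u x. Re (Kf (fco \<Phi>) u u x x) \<ge> 0"
    and "hermf (fco \<Phi>)"
proof -
  fix x y u w
  define g where "g = (\<lambda>m. \<Sum>j<2. \<Phi> (opm x y) $$ (m,j) * u j)"
  have a: "nv x * Re (Kf (fco \<Phi>) u u y y) \<ge> (cmod (g 0))^2 + (cmod (g 1))^2"
    using sch_core(1)[OF L Sch, where x=x and y=y and u=u] unfolding g_def sum2 .
  have b: "Kf (fco \<Phi>) w u x y = cnj (w 0) * g 0 + cnj (w 1) * g 1"
    using sch_core(2)[OF L Sch, where w=w and x=x and y=y and u=u] unfolding qf_phi_opm[OF L] g_def sum2 .
  have c: "(cmod (Kf (fco \<Phi>) w u x y))^2 \<le> nv w * ((cmod (g 0))^2 + (cmod (g 1))^2)"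
    unfolding b nv_def sum2 by (rule cs2)
  have nw: "nv w \<ge> 0" unfolding nv_def by (simp add: sum_nonneg)
  from mult_left_mono[OF a nw] c
  show "nv x * nv w * Re (Kf (fco \<Phi>) u u y y) \<ge> (cmod (Kf (fco \<Phi>) w u x y))^2"
    by (simp add: algebra_simps)
next
  fix u x
  show "Re (Kf (fco \<Phi>) u u x x) \<ge> 0"
    using sch_core(1)[OF L Sch, where x="v2 1 0" and u=u and y=x] unfolding nv_e0
    by (smt (verit) sum_nonneg zero_le_power2)
next
  show "hermf (fco \<Phi>)"
  proof (rule hermf_from)
    fix y :: "nat \<Rightarrow> complex" and i j :: nat assume i: "i < 2" and j: "j < 2"
    show "cnj (\<Sum>k<2. \<Sum>l<2. fco \<Phi> j i k l * (y k * cnj (y l))) = (\<Sum>k<2. \<Sum>l<2. fco \<Phi> i j k l * (y k * cnj (y l)))"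
      using sch_core(3)[OF L Sch i j, where x="v2 1 0" and y=y] unfolding sch_core(4)[OF L Sch i j, where x="v2 1 0" and y=y] sch_core(4)[OF L Sch j i, where x="v2 1 0" and y=y] nv_e0
      by simp
  qed
qed




lemma sum_insert_index:
  fixes g :: "nat \<Rightarrow> 'b::comm_monoid_add"
  assumes i: "i < Suc n"
  shows "(\<Sum>k<Suc n. g k) = g i + (\<Sum>j<n. g (insert_index i j))"
proof -
  have inj: "inj_on (insert_index i) {..<n}"
    unfolding insert_index_def inj_on_def by auto
  have img: "insert_index i ` {..<n} = {..<Suc n} - {i}"
  proof
    show "insert_index i ` {..<n} \<subseteq> {..<Suc n} - {i}"
      unfolding insert_index_def by auto
    show "{..<Suc n} - {i} \<subseteq> insert_index i ` {..<n}"
    proof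
      fix k assume k: "k \<in> {..<Suc n} - {i}"
      show "k \<in> insert_index i ` {..<n}"
      proof (cases "k < i")
        case True
        then have "insert_index i k = k" unfolding insert_index_def by auto
        moreover have "k < n" using True i by auto
        ultimately show ?thesis by (metis image_eqI lessThan_iff)
      next
        case False
        then have "k > i" using k by auto
        then obtain k' where k': "k = Suc k'" by (cases k) auto
        then have "insert_index i k' = k" using \<open>k > i\<close> unfolding insert_index_def by auto
        moreover have "k' < n" using k k' by auto
        ultimately show ?thesis by (metis image_eqI lessThan_iff)
      qed
    qed
  qed
  have "(\<Sum>k<Suc n. g k) = g i + (\<Sum>k\<in>{..<Suc n} - {i}. g k)"
    using i by (subst sum.remove[of "{..<Suc n}" i]) auto
  also have "(\<Sum>k\<in>{..<Suc n} - {i}. g k) = (\<Sum>j<n. g (insert_index i j))"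
    using sum.reindex[OF inj, of g] img by simp
  finally show ?thesis .
qed

lemma char_poly_coeff_trace:
  fixes A :: "complex mat"
  assumes "A \<in> carrier_mat (Suc m) (Suc m)"
  shows "coeff (char_poly A) m = - (\<Sum>i<Suc m. A $$ (i,i))"
  using assms
proof (induction m arbitrary: A)
  case 0
  have "char_poly A = (char_poly_matrix A) $$ (0,0)"
    unfolding char_poly_def using 0 by (simp add: det_single)
  also have "\<dots> = [:0,1:] + [: - A $$ (0,0) :]"
    unfolding char_poly_matrix_def using 0 by auto
  finally show ?case by simp
next
  case (Suc m)
  let ?n = "Suc (Suc m)"
  have A: "A \<in> carrier_mat ?n ?n" by fact
  have "coeff (pderiv (char_poly A)) m = of_nat (Suc m) * coeff (char_poly A) (Suc m)"
    by (simp add: coeff_pderiv)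
  also have "pderiv (char_poly A) = (\<Sum>i<?n. char_poly (mat_delete A i i))"
    by (rule pderiv_char_poly[OF A])
  finally have eq: "of_nat (Suc m) * coeff (char_poly A) (Suc m) =
      (\<Sum>i<?n. coeff (char_poly (mat_delete A i i)) m)"
    by (simp add: coeff_sum)
  have md: "mat_delete A i i \<in> carrier_mat (Suc m) (Suc m)" for i
    using mat_delete_carrier[OF A] by simp
  have tr: "(\<Sum>j<Suc m. mat_delete A i i $$ (j,j)) = (\<Sum>k<?n. A $$ (k,k)) - A $$ (i,i)"
    if i: "i < ?n" for i
  proof -
    have "(\<Sum>j<Suc m. mat_delete A i i $$ (j,j)) = (\<Sum>j<Suc m. A $$ (insert_index i j, insert_index i j))"
      by (rule sum.cong[OF refl], rule mat_delete_index[symmetric, OF A i i], auto)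
    then show ?thesis using sum_insert_index[OF i, of "\<lambda>k. A $$ (k,k)"] by simp
  qed
  have "(\<Sum>i<?n. coeff (char_poly (mat_delete A i i)) m) =
        (\<Sum>i<?n. A $$ (i,i) - (\<Sum>k<?n. A $$ (k,k)))"
  proof (rule sum.cong[OF refl])
    fix i assume "i \<in> {..<?n}"
    then have "i < ?n" by simp
    then show "coeff (char_poly (mat_delete A i i)) m = A $$ (i,i) - (\<Sum>k<?n. A $$ (k,k))"
      using Suc.IH[OF md, of i] tr[of i] by (simp del: sum.lessThan_Suc)
  qed
  also have "\<dots> = (\<Sum>i<?n. A $$ (i,i)) - of_nat ?n * (\<Sum>k<?n. A $$ (k,k))"
    by (simp add: sum_subtractf)
  also have "\<dots> = of_nat (Suc m) * (- (\<Sum>k<?n. A $$ (k,k)))"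
    by (simp add: algebra_simps)
  finally have "of_nat (Suc m) * coeff (char_poly A) (Suc m) = of_nat (Suc m) * (- (\<Sum>k<?n. A $$ (k,k)))"
    using eq by simp
  then show ?case by (simp del: of_nat_Suc)
qed




lemma coeff_prod4: "coeff ([:-1, 1:] * [:-l1, 1:] * [:-l2, 1:] * [:-(l3::complex), 1:]) 3 = -(1 + l1 + l2 + l3)"
  by (simp add: numeral_3_eq_3 algebra_simps)

lemma roots_prod4:
  "poly ([:-1, 1:] * [:-l1, 1:] * [:-l2, 1:] * [:-(l3::complex), 1:]) l1 = 0"
  "poly ([:-1, 1:] * [:-l1, 1:] * [:-l2, 1:] * [:-(l3::complex), 1:]) l2 = 0"
  "poly ([:-1, 1:] * [:-l1, 1:] * [:-l2, 1:] * [:-(l3::complex), 1:]) l3 = 0"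
  unfolding poly_mult by simp_all

lemma rep_carrier: "rep_mat \<Phi> \<in> carrier_mat 4 4" unfolding rep_mat_def by simp

lemma rep_entry: "r < 4 \<Longrightarrow> s < 4 \<Longrightarrow> rep_mat \<Phi> $$ (r,s) = fco \<Phi> (r div 2) (r mod 2) (s div 2) (s mod 2)"
  unfolding rep_mat_def fco_def E2_def by simp

lemma eig_extract:
  assumes "poly (char_poly (rep_mat \<Phi>)) lam = 0"
  shows "\<exists>V. (\<forall>i j. i < 2 \<longrightarrow> j < 2 \<longrightarrow> (\<Sum>k<2. \<Sum>l<2. fco \<Phi> i j k l * V k l) = lam * V i j)
      \<and> \<not> (V 0 0 = 0 \<and> V 0 1 = 0 \<and> V 1 0 = 0 \<and> V 1 1 = 0)"
proof -
  let ?M = "rep_mat \<Phi>"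
  have "eigenvalue ?M lam" using eigenvalue_root_char_poly[OF rep_carrier] assms by simp
  then obtain v where v: "v \<in> carrier_vec 4" "v \<noteq> 0\<^sub>v 4" "?M *\<^sub>v v = lam \<cdot>\<^sub>v v"
    unfolding eigenvalue_def eigenvector_def using rep_carrier[of \<Phi>] by auto
  define V where "V = (\<lambda>k l. v $ (2 * k + l))"
  have dv: "dim_vec v = 4" using v(1) by simp
  have row: "(?M *\<^sub>v v) $ r = (\<Sum>s<4. ?M $$ (r,s) * v $ s)" if "r < 4" for r
    using that dv rep_carrier[of \<Phi>] by (simp add: scalar_prod_def lessThan_atLeast0)
  have ev: "(\<Sum>k<2. \<Sum>l<2. fco \<Phi> i j k l * V k l) = lam * V i j" if i: "i < 2" and j: "j < 2" for i j
  proof -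
    have r4: "2 * i + j < 4" using i j by simp
    have "(?M *\<^sub>v v) $ (2 * i + j) = lam * v $ (2 * i + j)" using v(3) r4 dv by simp
    then have "(\<Sum>s<4. ?M $$ (2 * i + j, s) * v $ s) = lam * v $ (2 * i + j)" using row[OF r4] by simp
    then show ?thesis using lt2[OF i] lt2[OF j] unfolding sum4 sum2 V_def
      by (auto simp: rep_entry add.assoc)
  qed
  have nz: "\<not> (V 0 0 = 0 \<and> V 0 1 = 0 \<and> V 1 0 = 0 \<and> V 1 1 = 0)"
  proof
    assume a: "V 0 0 = 0 \<and> V 0 1 = 0 \<and> V 1 0 = 0 \<and> V 1 1 = 0"
    have "v = 0\<^sub>v 4"
    proof (rule eq_vecI)
      fix s assume "s < dim_vec (0\<^sub>v 4 :: complex vec)"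
      then have "s < 4" by simp
      then have "s = 0 \<or> s = 1 \<or> s = 2 \<or> s = 3" by auto
      then show "v $ s = 0\<^sub>v 4 $ s" using a \<open>s < 4\<close> unfolding V_def by auto
    qed (use dv in simp)
    then show False using v(2) by simp
  qed
  show ?thesis using ev nz by blast
qed

lemma trace_rep:
  assumes "char_poly (rep_mat \<Phi>) = [:-1, 1:] * [:-l1, 1:] * [:-l2, 1:] * [:-l3, 1:]"
  shows "(\<Sum>k<2. \<Sum>l<2. fco \<Phi> k l k l) = 1 + l1 + l2 + l3"
proof -
  have "coeff (char_poly (rep_mat \<Phi>)) 3 = - (\<Sum>i<Suc 3. rep_mat \<Phi> $$ (i,i))"
    by (rule char_poly_coeff_trace) (use rep_carrier in simp)
  also have "(\<Sum>i<Suc 3. rep_mat \<Phi> $$ (i,i)) = (\<Sum>k<2. \<Sum>l<2. fco \<Phi> k l k l)"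
    unfolding numeral_3_eq_3[symmetric] sum2 by (simp add: sum4 rep_entry del: sum.lessThan_Suc)
  finally have "- (1 + l1 + l2 + l3) = - (\<Sum>k<2. \<Sum>l<2. fco \<Phi> k l k l)" unfolding assms coeff_prod4 .
  then show ?thesis by (metis neg_equal_iff_equal)
qed




lemma fin_sch: fixes a b c :: real
  shows "3 * c \<ge> 2 * (1 + a + b + c) - 5 \<Longrightarrow> (3/2 - 1) * (1 + c) \<ge> 2 * (3/2 - 2) + a + b"
  by (simp add: field_simps)

lemma fin_cp: fixes a b c :: real
  shows "2 * c \<ge> (1 + a + b + c) - 2 \<Longrightarrow> (2 - 1) * (1 + c) \<ge> 2 * (2 - 2) + a + b"
  by simp

lemma up_all:
  assumes U: "unitalf f" and Hm: "hermf f" and P: "\<And>u x. Re (Kf f u u x x) \<ge> 0"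
    and E: "\<exists>V. (\<forall>i j. i < 2 \<longrightarrow> j < 2 \<longrightarrow> (\<Sum>k<2. \<Sum>l<2. f i j k l * V k l) = lam * V i j)
      \<and> \<not> (V 0 0 = 0 \<and> V 0 1 = 0 \<and> V 1 0 = 0 \<and> V 1 1 = 0)"
  shows "Re lam \<le> 1"
proof (cases "lam = 1")
  case True then show ?thesis by simp
next
  case False
  obtain V where ev: "\<forall>i j. i < 2 \<longrightarrow> j < 2 \<longrightarrow> (\<Sum>k<2. \<Sum>l<2. f i j k l * V k l) = lam * V i j"
    and nz: "\<not> (V 0 0 = 0 \<and> V 0 1 = 0 \<and> V 1 0 = 0 \<and> V 1 1 = 0)" using E by blast
  show ?thesis by (rule eig_up[OF U Hm P _ nz False]) (use ev in blast)
qed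

theorem mainTheorem11:
  fixes \<alpha> :: real and \<Phi> :: "complex mat \<Rightarrow> complex mat"
    and l1 l2 l3 :: complex
  assumes "\<alpha> \<in> {1, 3/2, 2}"
    and "linear_map_M2 \<Phi>"
    and "unital_M2 \<Phi>"
    and "alpha_positive \<alpha> \<Phi>"
    and "char_poly (rep_mat \<Phi>) = [:-1, 1:] * [:-l1, 1:] * [:-l2, 1:] * [:-l3, 1:]"
    and "Re l1 \<ge> Re l2" and "Re l2 \<ge> Re l3"
  shows "(\<alpha> - 1) * (1 + Re l3) \<ge> 2 * (\<alpha> - 2) + Re l1 + Re l2"
proof -
  note L = assms(2)
  have U: "unitalf (fco \<Phi>)" by (rule unital_fco[OF L assms(3)])
  have T: "Re (\<Sum>k<2. \<Sum>l<2. fco \<Phi> k l k l) = 1 + Re l1 + Re l2 + Re l3"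
    using trace_rep[OF assms(5)] by simp
  have E1: "\<exists>V. (\<forall>i j. i < 2 \<longrightarrow> j < 2 \<longrightarrow> (\<Sum>k<2. \<Sum>l<2. fco \<Phi> i j k l * V k l) = l1 * V i j)
      \<and> \<not> (V 0 0 = 0 \<and> V 0 1 = 0 \<and> V 1 0 = 0 \<and> V 1 1 = 0)"
    by (rule eig_extract) (unfold assms(5), rule roots_prod4)
  have E2: "\<exists>V. (\<forall>i j. i < 2 \<longrightarrow> j < 2 \<longrightarrow> (\<Sum>k<2. \<Sum>l<2. fco \<Phi> i j k l * V k l) = l2 * V i j)
      \<and> \<not> (V 0 0 = 0 \<and> V 0 1 = 0 \<and> V 1 0 = 0 \<and> V 1 1 = 0)"
    by (rule eig_extract) (unfold assms(5), rule roots_prod4)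
  have E3: "\<exists>V. (\<forall>i j. i < 2 \<longrightarrow> j < 2 \<longrightarrow> (\<Sum>k<2. \<Sum>l<2. fco \<Phi> i j k l * V k l) = l3 * V i j)
      \<and> \<not> (V 0 0 = 0 \<and> V 0 1 = 0 \<and> V 1 0 = 0 \<and> V 1 1 = 0)"
    by (rule eig_extract) (unfold assms(5), rule roots_prod4)
  obtain V3 where ev3: "\<forall>i j. i < 2 \<longrightarrow> j < 2 \<longrightarrow> (\<Sum>k<2. \<Sum>l<2. fco \<Phi> i j k l * V3 k l) = l3 * V3 i j"
    and nz3: "\<not> (V3 0 0 = 0 \<and> V3 0 1 = 0 \<and> V3 1 0 = 0 \<and> V3 1 1 = 0)" using E3 by blast
  have ev3': "\<And>i j. i < 2 \<Longrightarrow> j < 2 \<Longrightarrow> (\<Sum>k<2. \<Sum>l<2. fco \<Phi> i j k l * V3 k l) = l3 * V3 i j"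
    using ev3 by blast
  consider (a1) "\<alpha> = 1" "positive_map \<Phi>" | (a2) "\<alpha> = 3/2" "schwarz_map \<Phi>" | (a3) "\<alpha> = 2" "completely_positive \<Phi>"
    using assms(4) unfolding alpha_positive_def by blast
  then show ?thesis
  proof cases
    case a1
    have PP: "\<And>y. psd 2 (\<Phi> (opm y y))" using positive_PP[OF a1(2)] .
    note P = pos_facts(1)[OF L PP] and Hm = pos_facts(2)[OF L PP]
    have "Re l1 \<le> 1" by (rule up_all[OF U Hm P E1])
    moreover have "Re l2 \<le> 1" by (rule up_all[OF U Hm P E2])
    ultimately show ?thesis using a1(1) by simp
  next
    case a2
    note S = sch_facts(1)[OF L a2(2)] and P = sch_facts(2)[OF L a2(2)] and Hm = sch_facts(3)[OF L a2(2)]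
    have u1: "Re l1 \<le> 1" by (rule up_all[OF U Hm P E1])
    have u2: "Re l2 \<le> 1" by (rule up_all[OF U Hm P E2])
    show ?thesis
    proof (cases "l3 = 1")
      case True
      then show ?thesis using u1 u2 a2(1) assms(6,7) by simp
    next
      case False
      have "3 * Re l3 \<ge> 2 * Re (\<Sum>k<2. \<Sum>l<2. fco \<Phi> k l k l) - 5"
        by (rule eig_sch[OF U Hm P S ev3' nz3 False])
      then have h: "3 * Re l3 \<ge> 2 * (1 + Re l1 + Re l2 + Re l3) - 5" unfolding T .
      show ?thesis unfolding a2(1) by (rule fin_sch[OF h])
    qed
  next
    case a3
    have PP: "\<And>y. psd 2 (\<Phi> (opm y y))" using cp_PP[OF L a3(2)] .
    note P = pos_facts(1)[OF L PP] and Hm = pos_facts(2)[OF L PP]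
    note C = cp_choi[OF L a3(2)]
    have u1: "Re l1 \<le> 1" by (rule up_all[OF U Hm P E1])
    have u2: "Re l2 \<le> 1" by (rule up_all[OF U Hm P E2])
    show ?thesis
    proof (cases "l3 = 1")
      case True
      then show ?thesis using u1 u2 a3(1) assms(6,7) by simp
    next
      case False
      have "2 * Re l3 \<ge> Re (\<Sum>k<2. \<Sum>l<2. fco \<Phi> k l k l) - 2"
        by (rule eig_cp[OF U Hm C ev3' nz3 False])
      then have h: "2 * Re l3 \<ge> (1 + Re l1 + Re l2 + Re l3) - 2" unfolding T .
      show ?thesis unfolding a3(1) by (rule fin_cp[OF h])
    qed
  qed
qed


end
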